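(* Let $p\in{\cal H}_R$ be a primitive element such that $\pi_c(p)=0$. Then $p=0$.
   Context: A rooted tree is a finite connected and simply connected graph with a distinguished vertex (the root), edges oriented away from the root. ${\cal H}_R$ is the commutative polynomial algebra over $\mathbb{Q}$ on isomorphism classes of rooted trees; its monomials (forests) form a basis, $1$ being the empty forest. An admissible cut $C$ of a tree $t$ is a nonempty set of edges such that every path from the root to a vertex contains at most one edge of $C$; removing them gives a forest in which $R^C(t)$ is the tree containing the root and $P^C(t)$ the product of the others. The coproduct is the algebra morphism $\Delta$ with $\Delta(t)=1\otimes t+t\otimes1+\sum_CP^C(t)\otimes R^C(t)$ on trees; $p$ is primitive iff $\Delta(p)=p\otimes1+1\otimes p$. $\pi_c$ is the linear projection of ${\cal H}_R$ onto the span of rooted trees which vanishes on every forest that is not a single tree (including the empty forest). *)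

theory Defs
  imports Complex_Main "HOL-Library.Multiset"
begin

text \<open>Isomorphism classes of rooted trees: a tree is a root together with the
  (unordered) multiset of subtrees hanging below its children.\<close>
datatype tree = Node "tree multiset"

text \<open>Forests = monomials of the polynomial algebra H_R; the empty forest is 1.\<close>
type_synonym forest = "tree multiset"

definition mcomb :: "('a multiset \<times> 'b multiset) multiset \<Rightarrow> ('a multiset \<times> 'b multiset) multiset
                     \<Rightarrow> ('a multiset \<times> 'b multiset) multiset" where
  "mcomb A B = (\<Sum>x\<in>#A. image_mset (\<lambda>y. (fst x + fst y, snd x + snd y)) B)"

definition mcomb_all :: "('a multiset \<times> 'b multiset) multiset multiset \<Rightarrow> ('a multiset \<times> 'b multiset) multiset" where
  "mcomb_all M = fold_mset mcomb {#({#}, {#})#} M"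

text \<open>cuts t: the multiset, over all admissible cuts C of t together with the empty
  cut, of the pairs (P^C(t), R^C(t)); the empty cut contributes (1, t).
  A cut of the tree with root subtrees F is obtained by choosing independently,
  for each edge from the root to a child subtree c, either to cut this edge
  (c goes entirely into P) or not to cut it and then choosing a (possibly empty)
  cut of c (so that every root-to-vertex path has at most one cut edge).\<close>
primrec cuts :: "tree \<Rightarrow> (forest \<times> tree) multiset" where
  "cuts (Node F) =
     image_mset (\<lambda>(P, Rs). (P, Node Rs))
       (mcomb_all (image_mset (\<lambda>c. {#({#c#}, {#})#} + image_mset (\<lambda>(P, R). (P, {#R#})) (cuts c)) F))"

text \<open>Coproduct of a tree as a multiset of basis tensors P (x) R:
  Delta(t) = t (x) 1 + 1 (x) t + sum over nonempty admissible cuts.\<close>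
definition coprod_tree :: "tree \<Rightarrow> (forest \<times> forest) multiset" where
  "coprod_tree t = {#({#t#}, {#})#} + image_mset (\<lambda>(P, R). (P, {#R#})) (cuts t)"

definition coprod_forest :: "forest \<Rightarrow> (forest \<times> forest) multiset" where
  "coprod_forest F = mcomb_all (image_mset coprod_tree F)"

text \<open>Elements of H_R: finitely supported coefficient functions on forests.
  Elements of H_R (x) H_R: coefficient functions on pairs of forests.\<close>
definition in_HR :: "(forest \<Rightarrow> rat) \<Rightarrow> bool" where
  "in_HR p \<longleftrightarrow> finite {F. p F \<noteq> 0}"

definition coprod :: "(forest \<Rightarrow> rat) \<Rightarrow> (forest \<times> forest \<Rightarrow> rat)" where
  "coprod p = (\<lambda>ab. \<Sum>F\<in>{F. p F \<noteq> 0}. p F * of_nat (count (coprod_forest F) ab))"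

definition prim_tensor :: "(forest \<Rightarrow> rat) \<Rightarrow> (forest \<times> forest \<Rightarrow> rat)" where
  "prim_tensor p = (\<lambda>(a, b). (if b = {#} then p a else 0) + (if a = {#} then p b else 0))"

definition primitive :: "(forest \<Rightarrow> rat) \<Rightarrow> bool" where
  "primitive p \<longleftrightarrow> coprod p = prim_tensor p"

definition pi_c :: "(forest \<Rightarrow> rat) \<Rightarrow> (forest \<Rightarrow> rat)" where
  "pi_c p = (\<lambda>F. if size F = 1 then p F else 0)"

end

theory Submission
  imports Defs
begin

definition pp :: "('a multiset \<times> 'b multiset) \<Rightarrow> ('a multiset \<times> 'b multiset) \<Rightarrow> ('a multiset \<times> 'b multiset)" where
  "pp x y = (fst x + fst y, snd x + snd y)"

lemma pp_comm: "pp x y = pp y x" by (simp add: pp_def add.commute)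
lemma pp_assoc: "pp (pp x y) z = pp x (pp y z)" by (simp add: pp_def add.assoc)

lemma mcomb_empty_left[simp]: "mcomb {#} B = {#}" by (simp add: mcomb_def)
lemma mcomb_add_left[simp]: "mcomb (add_mset a A) B = image_mset (pp a) B + mcomb A B"
  by (simp add: mcomb_def pp_def[abs_def])
lemma mcomb_union_left: "mcomb (A + A') B = mcomb A B + mcomb A' B"
  by (induct A) (auto simp: add.assoc)
lemma mcomb_empty_right[simp]: "mcomb A {#} = {#}" by (induct A) auto
lemma mcomb_add_right: "mcomb A (add_mset b B) = image_mset (\<lambda>x. pp x b) A + mcomb A B"
  by (induct A) (auto simp: pp_comm)
lemma mcomb_comm: "mcomb A B = mcomb B A"
  by (induct A) (auto simp: mcomb_add_right pp_comm)
lemma mcomb_image: "mcomb (image_mset (pp a) B) C = image_mset (pp a) (mcomb B C)"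
  by (induct B) (auto simp: pp_assoc[symmetric] multiset.map_comp comp_def)
lemma mcomb_assoc: "mcomb (mcomb A B) C = mcomb A (mcomb B C)"
  by (induct A) (auto simp: mcomb_union_left mcomb_image)
lemma mcomb_cfc: "comp_fun_commute mcomb"
proof
  fix x y :: "('a multiset \<times> 'b multiset) multiset"
  show "mcomb y \<circ> mcomb x = mcomb x \<circ> mcomb y"
  proof
    fix z
    have "mcomb y (mcomb x z) = mcomb (mcomb y x) z" by (rule mcomb_assoc[symmetric])
    also have "\<dots> = mcomb (mcomb x y) z" by (simp only: mcomb_comm[of y x])
    also have "\<dots> = mcomb x (mcomb y z)" by (rule mcomb_assoc)
    finally show "(mcomb y \<circ> mcomb x) z = (mcomb x \<circ> mcomb y) z" by simp
  qed
qed
lemma mcomb_all_empty[simp]: "mcomb_all {#} = {#({#}, {#})#}"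
  by (simp add: mcomb_all_def)
lemma mcomb_all_add[simp]: "mcomb_all (add_mset x M) = mcomb x (mcomb_all M)"
  unfolding mcomb_all_def by (rule comp_fun_commute.fold_mset_add_mset[OF mcomb_cfc])
lemma mem_mcomb: "z \<in># mcomb A B \<longleftrightarrow> (\<exists>a\<in>#A. \<exists>b\<in>#B. z = pp a b)"
  by (induct A) auto

lemma coprod_forest_add[simp]:
  "coprod_forest (add_mset t G) = mcomb (coprod_tree t) (coprod_forest G)"
  by (simp only: coprod_forest_def image_mset_add_mset mcomb_all_add)
lemma coprod_forest_empty[simp]: "coprod_forest {#} = {#({#}, {#})#}"
  by (simp add: coprod_forest_def)

lemma cuts_root: "(P, R) \<in># cuts t \<Longrightarrow> P = {#} \<Longrightarrow> R = t"
proof (induction t arbitrary: P R)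
  case (Node F)
  let ?h = "\<lambda>c. {#({#c#}, {#})#} + image_mset (\<lambda>(P, R). (P, {#R#})) (cuts c)"
  have "\<forall>M. set_mset M \<subseteq> set_mset F \<longrightarrow> (\<forall>x\<in>#mcomb_all (image_mset ?h M). fst x = {#} \<longrightarrow> snd x = M)"
  proof
    fix M show "set_mset M \<subseteq> set_mset F \<longrightarrow> (\<forall>x\<in>#mcomb_all (image_mset ?h M). fst x = {#} \<longrightarrow> snd x = M)"
    proof (induct M)
      case empty then show ?case by simp
    next
      case (add c M)
      show ?case
      proof (intro impI ballI)
        fix x assume sub: "set_mset (add_mset c M) \<subseteq> set_mset F"
          and x: "x \<in># mcomb_all (image_mset ?h (add_mset c M))" and e: "fst x = {#}"
        from x obtain a b where a: "a \<in># ?h c" and b: "b \<in># mcomb_all (image_mset ?h M)" and xab: "x = pp a b"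
          by (simp only: mcomb_all_add image_mset_add_mset mem_mcomb) blast
        from e xab have ea: "fst a = {#}" and eb: "fst b = {#}" by (auto simp: pp_def)
        from sub add b eb have sb: "snd b = M" by auto
        from a ea obtain P R where PR: "(P, R) \<in># cuts c" "a = (P, {#R#})" by auto
        with ea have "P = {#}" by simp
        with PR sub Node.IH have "R = c" by auto
        with PR sb xab show "snd x = add_mset c M" by (simp add: pp_def)
      qed
    qed
  qed
  then have "\<forall>x\<in>#mcomb_all (image_mset ?h F). fst x = {#} \<longrightarrow> snd x = F" by blast
  with Node.prems show ?case by auto
qed


lemma coprod_tree_prop:
  assumes "(a, b) \<in># coprod_tree t"
  shows "1 \<le> size a + size b \<and> (size a + size b = 1 \<longrightarrow> a + b = {#t#})"
proof -
  from assms have "(a, b) = ({#t#}, {#}) \<or> (\<exists>R. (a, R) \<in># cuts t \<and> b = {#R#})"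
    by (auto simp: coprod_tree_def)
  then show ?thesis
  proof
    assume "(a, b) = ({#t#}, {#})" then show ?thesis by simp
  next
    assume "\<exists>R. (a, R) \<in># cuts t \<and> b = {#R#}"
    then obtain R where R: "(a, R) \<in># cuts t" "b = {#R#}" by blast
    show ?thesis
    proof (cases "a = {#}")
      case True with R cuts_root show ?thesis by auto
    next
      case False then have "size a \<ge> 1" by (simp add: Suc_le_eq nonempty_has_size)
      with R False show ?thesis by simp
    qed
  qed
qed

lemma coprod_forest_prop:
  "(a, b) \<in># coprod_forest G \<Longrightarrow> size G \<le> size a + size b \<and> (size a + size b = size G \<longrightarrow> a + b = G)"
proof (induction G arbitrary: a b)
  case empty then show ?case by simp
next
  case (add t G)
  from add.prems obtain x y where x: "x \<in># coprod_tree t" and y: "y \<in># coprod_forest G"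
    and xy: "(a, b) = pp x y" by (auto simp: mem_mcomb)
  obtain x1 x2 where xe: "x = (x1, x2)" by (cases x)
  obtain y1 y2 where ye: "y = (y1, y2)" by (cases y)
  from x xe have X: "1 \<le> size x1 + size x2 \<and> (size x1 + size x2 = 1 \<longrightarrow> x1 + x2 = {#t#})"
    using coprod_tree_prop by blast
  from y ye add.IH have Y: "size G \<le> size y1 + size y2 \<and> (size y1 + size y2 = size G \<longrightarrow> y1 + y2 = G)"
    by blast
  from xy xe ye have ab: "a = x1 + y1" "b = x2 + y2" by (auto simp: pp_def)
  show ?case
  proof
    show "size (add_mset t G) \<le> size a + size b" using X Y ab by simp
    show "size a + size b = size (add_mset t G) \<longrightarrow> a + b = add_mset t G"
    proof
      assume "size a + size b = size (add_mset t G)"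
      with X Y ab have "size x1 + size x2 = 1" "size y1 + size y2 = size G" by simp_all
      with X Y have "x1 + x2 = {#t#}" "y1 + y2 = G" by simp_all
      with ab show "a + b = add_mset t G"
        by (metis add_mset_add_single union_assoc union_commute union_lcomm)
    qed
  qed
qed

lemma cuts_trivial: "({#}, t) \<in># cuts t"
proof (induction t)
  case (Node F)
  let ?h = "\<lambda>c. {#({#c#}, {#})#} + image_mset (\<lambda>(P, R). (P, {#R#})) (cuts c)"
  have "\<forall>M. set_mset M \<subseteq> set_mset F \<longrightarrow> ({#}, M) \<in># mcomb_all (image_mset ?h M)"
  proof
    fix M show "set_mset M \<subseteq> set_mset F \<longrightarrow> ({#}, M) \<in># mcomb_all (image_mset ?h M)"
    proof (induct M)
      case empty then show ?case by simp
    next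
      case (add c M)
      show ?case
      proof
        assume sub: "set_mset (add_mset c M) \<subseteq> set_mset F"
        with add have m: "({#}, M) \<in># mcomb_all (image_mset ?h M)" by auto
        from sub Node.IH have "({#}, c) \<in># cuts c" by auto
        then have c: "({#}, {#c#}) \<in># ?h c" by force
        have "({#}, add_mset c M) = pp ({#}, {#c#}) ({#}, M)" by (simp add: pp_def)
        with m c show "({#}, add_mset c M) \<in># mcomb_all (image_mset ?h (add_mset c M))"
          by (simp only: mcomb_all_add image_mset_add_mset mem_mcomb) blast
      qed
    qed
  qed
  then have "({#}, F) \<in># mcomb_all (image_mset ?h F)" by blast
  then show ?case by force
qed

lemma forest_left: "(G, {#}) \<in># coprod_forest G"
proof (induction G)
  case empty then show ?case by simp
next
  case (add t G)
  have "({#t#}, {#}) \<in># coprod_tree t" by (simp add: coprod_tree_def)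
  moreover have "(add_mset t G, {#}) = pp ({#t#}, {#}) (G, {#})" by (simp add: pp_def)
  ultimately show ?case using add by (simp only: coprod_forest_add mem_mcomb) blast
qed

lemma key_mem: "(G, {#t#}) \<in># coprod_forest (add_mset t G)"
proof -
  have "({#}, {#t#}) \<in># coprod_tree t" using cuts_trivial[of t] by (force simp: coprod_tree_def)
  moreover have "(G, {#t#}) = pp ({#}, {#t#}) (G, {#})" by (simp add: pp_def)
  ultimately show ?thesis using forest_left[of G] by (simp only: coprod_forest_add mem_mcomb) blast
qed

lemma coprod_single:
  assumes "in_HR p"
    and "\<And>G. p G \<noteq> 0 \<Longrightarrow> G \<noteq> F0 \<Longrightarrow> count (coprod_forest G) ab = 0"
  shows "coprod p ab = p F0 * of_nat (count (coprod_forest F0) ab)"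
proof -
  let ?S = "{F. p F \<noteq> 0}"
  let ?h = "\<lambda>F. p F * of_nat (count (coprod_forest F) ab)"
  have fin: "finite ?S" using assms(1) by (simp add: in_HR_def)
  have z: "\<forall>F\<in>?S - {F0}. ?h F = 0" using assms(2) by auto
  have "coprod p ab = sum ?h ?S" by (simp add: coprod_def)
  also have "\<dots> = ?h F0"
  proof (cases "F0 \<in> ?S")
    case True
    then have "sum ?h ?S = ?h F0 + sum ?h (?S - {F0})" using fin by (simp add: sum.remove)
    also have "sum ?h (?S - {F0}) = 0" using z by (rule sum.neutral)
    finally show ?thesis by simp
  next
    case False
    then have "sum ?h ?S = sum ?h (?S - {F0})" by simp
    also have "\<dots> = 0" using z by (rule sum.neutral)
    finally show ?thesis using False by simp
  qed
  finally show ?thesis .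
qed

theorem lemma9p4:
  fixes p :: "forest \<Rightarrow> rat"
  assumes "in_HR p"
    and "primitive p"
    and "pi_c p = (\<lambda>_. 0)"
  shows "p = (\<lambda>_. 0)"
proof (rule ccontr)
  assume ne: "p \<noteq> (\<lambda>_. 0)"
  have prim: "\<And>ab. coprod p ab = prim_tensor p ab" using assms(2) by (simp add: primitive_def)
  have p0: "p {#} = 0"
  proof -
    have "coprod p ({#}, {#}) = p {#} * of_nat (count (coprod_forest {#}) ({#}, {#}))"
    proof (rule coprod_single[OF assms(1)])
      fix G :: forest assume "G \<noteq> {#}"
      then show "count (coprod_forest G) ({#}, {#}) = 0"
        using coprod_forest_prop[of "{#}" "{#}" G] by (auto simp: not_in_iff[symmetric])
    qed
    then have "coprod p ({#}, {#}) = p {#}" by simp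
    moreover have "prim_tensor p ({#}, {#}) = 2 * p {#}" by (simp add: prim_tensor_def)
    ultimately show ?thesis using prim[of "({#}, {#})"] by simp
  qed
  have p1: "p F = 0" if "size F = 1" for F
    using fun_cong[OF assms(3), of F] that by (simp add: pi_c_def)
  have big: "2 \<le> size F" if "p F \<noteq> 0" for F
  proof -
    have "size F \<noteq> 0" using that p0 by auto
    moreover have "size F \<noteq> 1" using that p1 by auto
    ultimately show ?thesis by linarith
  qed
  from ne obtain F1 where "p F1 \<noteq> 0" by auto
  define n where "n = (LEAST n. \<exists>F. p F \<noteq> 0 \<and> size F = n)"
  have "\<exists>F. p F \<noteq> 0 \<and> size F = n" unfolding n_def
    by (rule LeastI[of _ "size F1"]) (use \<open>p F1 \<noteq> 0\<close> in blast)
  then obtain F where F: "p F \<noteq> 0" "size F = n" by blast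
  have minim: "n \<le> size G" if "p G \<noteq> 0" for G
    unfolding n_def by (rule Least_le) (use that in blast)
  have "F \<noteq> {#}" using big[OF F(1)] by auto
  then obtain t where "t \<in># F" by (meson multiset_nonemptyE)
  define F' where "F' = F - {#t#}"
  have FF: "F = add_mset t F'" using \<open>t \<in># F\<close> by (simp add: F'_def)
  have sF': "size F' + 1 = n" using F(2) FF by simp
  have "F' \<noteq> {#}" using big[OF F(1)] FF by auto
  have "coprod p (F', {#t#}) = p F * of_nat (count (coprod_forest F) (F', {#t#}))"
  proof (rule coprod_single[OF assms(1)])
    fix G assume G: "p G \<noteq> 0" "G \<noteq> F"
    show "count (coprod_forest G) (F', {#t#}) = 0"
    proof (rule ccontr)
      assume "count (coprod_forest G) (F', {#t#}) \<noteq> 0"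
      then have "(F', {#t#}) \<in># coprod_forest G" by (simp add: not_in_iff[symmetric])
      from coprod_forest_prop[OF this] have
        "size G \<le> size F' + 1" "size F' + 1 = size G \<longrightarrow> F' + {#t#} = G" by simp_all
      with minim[OF G(1)] sF' have "F' + {#t#} = G" by simp
      with FF G(2) show False by simp
    qed
  qed
  moreover have "count (coprod_forest F) (F', {#t#}) \<noteq> 0"
    using key_mem[of F' t] FF by (simp add: not_in_iff[symmetric])
  ultimately have "coprod p (F', {#t#}) \<noteq> 0" using F(1) by simp
  moreover have "prim_tensor p (F', {#t#}) = 0" using \<open>F' \<noteq> {#}\<close> by (simp add: prim_tensor_def)
  ultimately show False using prim[of "(F', {#t#})"] by simp
qed

end
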